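(* Let $\mathbf X=\{X_n\}$ and $\mathbf Y=\{Y_n\}$ be general sources such that $$\inf_{0<\epsilon<1}\ \liminf_{n\to\infty}\ \inf_{0\le\delta<1-\epsilon}\{c_n^x(\delta+\epsilon)-c_n^y(\delta)\}\ \ge 0 .$$ Then there exist joint pmfs $P_{X_nY_n}$ on $\mathcal X_n\times\mathcal Y_n$ with marginals $P_{X_n}$ and $P_{Y_n}$, for each $n$, such that for every $\gamma>0$ $$\lim_{n\to\infty}P_{X_nY_n}\Big\{\log\tfrac{1}{P_{X_n}(X_n)}-\log\tfrac{1}{P_{Y_n}(Y_n)}<-\gamma\Big\}=0 .$$ In other words, $\text{p-}\liminf_{n\to\infty}\{\log\frac{1}{P_{X_n}(X_n)}-\log\frac{1}{P_{Y_n}(Y_n)}\}\ge 0$ under $P_{X_nY_n}$.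
   Context: Logarithms are natural. A general source $\mathbf X=\{X_n\}_{n\ge1}$ is a sequence of random variables, $X_n$ taking values in a countable set $\mathcal X_n$, with no consistency requirements between different $n$. Similarly $Y_n$ takes values in a countable set $\mathcal Y_n$. For a random variable $Z$ on a countable set $\mathcal Z$ with pmf $P_Z$, list the elements of positive probability as $z_1,z_2,\dots$ (a finite or countably infinite list) with $P_Z(z_1)\ge P_Z(z_2)\ge\cdots$ (ties broken arbitrarily). Set $\delta_0=0$ and $\delta_k=\sum_{i\le k}P_Z(z_i)$. For $\delta\in[0,1)$ define $c^z(\delta)=\log\frac{1}{P_Z(z_k)}$, where $k$ is the unique index with $\delta\in[\delta_{k-1},\delta_k)$. Here $c_n^x$ and $c_n^y$ denote this function built from $P_{X_n}$ and from $P_{Y_n}$ respectively. *)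

theory Defs
  imports "HOL-Probability.Probability"
begin

definition dec_enum :: "'a pmf \<Rightarrow> enat \<Rightarrow> (nat \<Rightarrow> 'a) \<Rightarrow> bool" where
  "dec_enum p N z \<longleftrightarrow>
     bij_betw z {k. enat k < N} (set_pmf p) \<and>
     (\<forall>i j. enat j < N \<longrightarrow> i \<le> j \<longrightarrow> pmf p (z j) \<le> pmf p (z i))"

text \<open>The function c(delta) of the paper: with delta_k = sum of the k largest
  probabilities, c(delta) = log (1 / P(z_k)) for the (1-indexed) k with
  delta in [delta_{k-1}, delta_k). In 0-indexed form: the index k with
  sum_{i<k} P(z_i) <= delta < sum_{i<=k} P(z_i). Ties are broken by an arbitrary
  (chosen) decreasing enumeration.\<close>
definition cfun :: "'a pmf \<Rightarrow> real \<Rightarrow> real" where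
  "cfun p \<delta> =
     (let N = (SOME N. \<exists>z. dec_enum p N z);
          z = (SOME z. dec_enum p N z);
          k = (THE k. enat k < N \<and> (\<Sum>i<k. pmf p (z i)) \<le> \<delta> \<and> \<delta> < (\<Sum>i\<le>k. pmf p (z i)))
      in ln (1 / pmf p (z k)))"

end

theory Submission
  imports Defs
begin

lemma finite_pmf_ge:
  fixes p :: "'a pmf" assumes c: "c > 0"
  shows "finite {x. pmf p x \<ge> c}"
proof (rule ccontr)
  assume inf: "infinite {x. pmf p x \<ge> c}"
  obtain n :: nat where n: "1 / c < real n" using reals_Archimedean2 by blast
  obtain F where F: "F \<subseteq> {x. pmf p x \<ge> c}" "finite F" "card F = n"
    using infinite_arbitrarily_large[OF inf] by blast
  have "real n * c = (\<Sum>x\<in>F. c)" using F by simp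
  also have "\<dots> \<le> (\<Sum>x\<in>F. pmf p x)" using F by (intro sum_mono) auto
  also have "\<dots> = measure p F" using F by (simp add: measure_measure_pmf_finite)
  also have "\<dots> \<le> 1" by simp
  finally have "real n * c \<le> 1" .
  with n c show False by (simp add: field_simps)
qed

lemma dec_enum_exists: "\<exists>N z. dec_enum p N z"
proof -
  define S where "S = set_pmf p"
  define t where "t = to_nat_on S"
  have tinj: "inj_on t S" unfolding t_def S_def by (intro inj_on_to_nat_on) simp
  define lt where "lt b a \<longleftrightarrow> pmf p a < pmf p b \<or> (pmf p a = pmf p b \<and> t b < t a)" for a b
  define dn where "dn a = {b\<in>S. lt b a}" for a
  define r where "r a = card (dn a)" for a
  have pos: "a \<in> S \<Longrightarrow> pmf p a > 0" for a
    unfolding S_def by (simp add: pmf_positive)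
  have fin: "finite (dn a)" if "a \<in> S" for a
  proof -
    have "dn a \<subseteq> {x. pmf p x \<ge> pmf p a}" unfolding dn_def lt_def by auto
    then show ?thesis using finite_pmf_ge[OF pos[OF that]] finite_subset by blast
  qed
  have trans: "lt a b \<Longrightarrow> lt b c \<Longrightarrow> lt a c" for a b c unfolding lt_def by auto
  have irr: "\<not> lt a a" for a unfolding lt_def by auto
  have tot: "a \<in> S \<Longrightarrow> b \<in> S \<Longrightarrow> a \<noteq> b \<Longrightarrow> lt a b \<or> lt b a" for a b
    using tinj unfolding lt_def inj_on_def by (metis linorder_neqE_linordered_idom nat_neq_iff)
  have rlt: "r a < r b" if "a \<in> S" "b \<in> S" "lt a b" for a b
  proof -
    have "dn a \<subset> dn b" unfolding dn_def using that trans irr by blast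
    then show ?thesis unfolding r_def using fin[OF that(2)] by (simp add: psubset_card_mono)
  qed
  have rinj: "inj_on r S"
    by (metis inj_onI less_irrefl rlt tot)
  define D where "D = r ` S"
  have down: "j \<in> D" if kD: "k \<in> D" and jk: "j < k" for j k
  proof -
    obtain a where a: "a \<in> S" "k = r a" using kD unfolding D_def by auto
    have "r ` dn a \<subseteq> {..<k}" using a rlt unfolding dn_def by auto
    moreover have "card (r ` dn a) = k"
      using a by (metis (no_types, lifting) card_image dn_def inj_on_subset mem_Collect_eq r_def rinj subsetI)
    ultimately have "r ` dn a = {..<k}"
      by (simp add: card_subset_eq)
    then have "j \<in> r ` dn a" using jk by auto
    then show ?thesis unfolding D_def dn_def by auto
  qed
  define N where "N = (if finite D then enat (card D) else \<infinity>)"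
  have DN: "D = {k. enat k < N}"
  proof (cases "finite D")
    case True
    have sub: "D \<subseteq> {..<card D}"
    proof
      fix m assume "m \<in> D"
      then have "{..m} \<subseteq> D" using down by (auto simp: le_less)
      then have "card {..m} \<le> card D" using True card_mono by blast
      then show "m \<in> {..<card D}" by simp
    qed
    then have "D = {..<card D}" using True by (simp add: card_subset_eq)
    then show ?thesis using True N_def by auto
  next
    case False
    have "k \<in> D" for k
    proof -
      obtain m where "m \<in> D" "k < m" using False
        by (meson finite_nat_set_iff_bounded_le not_le)
      then show ?thesis using down by blast
    qed
    then show ?thesis using False N_def by auto
  qed
  define z where "z = inv_into S r"
  have bij: "bij_betw z {k. enat k < N} S"
    unfolding z_def DN[symmetric] D_def using rinj by (simp add: bij_betw_inv_into inj_on_imp_bij_betw)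
  have rz: "k \<in> D \<Longrightarrow> r (z k) = k" for k unfolding z_def D_def by (simp add: f_inv_into_f)
  have mono: "pmf p (z j) \<le> pmf p (z i)" if "enat j < N" "i \<le> j" for i j
  proof (rule ccontr)
    assume "\<not> ?thesis"
    then have "lt (z j) (z i)" unfolding lt_def by auto
    moreover have "i \<in> D" "j \<in> D" using that DN by (auto simp: le_less_trans[of "enat i" "enat j"])
    moreover have "z i \<in> S" "z j \<in> S" using bij calculation(2,3) DN by (auto simp: bij_betw_def)
    ultimately have "j < i" using rlt rz by metis
    then show False using that by simp
  qed
  show ?thesis unfolding dec_enum_def S_def[symmetric] using bij mono by blast
qed


lemma de_mem: "dec_enum p N z \<Longrightarrow> enat k < N \<Longrightarrow> z k \<in> set_pmf p"
  unfolding dec_enum_def bij_betw_def by auto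

lemma de_pos: "dec_enum p N z \<Longrightarrow> enat k < N \<Longrightarrow> pmf p (z k) > 0"
  using de_mem pmf_positive by fastforce

lemma de_inj: "dec_enum p N z \<Longrightarrow> inj_on z {k. enat k < N}"
  unfolding dec_enum_def bij_betw_def by auto

lemma de_surj: "dec_enum p N z \<Longrightarrow> a \<in> set_pmf p \<Longrightarrow> \<exists>k. enat k < N \<and> z k = a"
  unfolding dec_enum_def bij_betw_def by (metis (mono_tags, lifting) image_iff mem_Collect_eq)

lemma enat_lt_le: "x < k \<Longrightarrow> enat k \<le> N \<Longrightarrow> enat x < N"
  by (metis enat_ord_simps(2) order.strict_trans2)

lemma de_mono: "(k::nat) \<le> l \<Longrightarrow> (\<Sum>i<k. pmf p (z i)) \<le> (\<Sum>i<l. pmf p (z i))"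
  by (intro sum_mono2) (auto simp: pmf_nonneg)

lemma de_le1:
  assumes d: "dec_enum p N z" and k: "enat k \<le> N"
  shows "(\<Sum>i<k. pmf p (z i)) \<le> 1"
proof -
  have sub: "{..<k} \<subseteq> {i. enat i < N}" using k enat_lt_le by auto
  then have "inj_on z {..<k}" using de_inj[OF d] inj_on_subset by blast
  then have "(\<Sum>i<k. pmf p (z i)) = sum (pmf p) (z ` {..<k})" by (simp add: sum.reindex)
  also have "\<dots> = measure p (z ` {..<k})" by (simp add: measure_measure_pmf_finite)
  also have "\<dots> \<le> 1" by simp
  finally show ?thesis .
qed

lemma de_exists:
  assumes d: "dec_enum p N z" and \<delta>: "0 \<le> \<delta>" "\<delta> < 1"
  shows "\<exists>k. enat k < N \<and> (\<Sum>i<k. pmf p (z i)) \<le> \<delta> \<and> \<delta> < (\<Sum>i<Suc k. pmf p (z i))"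
proof -
  have ex: "\<exists>k. enat k < N \<and> \<delta> < (\<Sum>i<Suc k. pmf p (z i))"
  proof (rule ccontr)
    assume "\<not> ?thesis"
    then have all: "\<And>k. enat k < N \<Longrightarrow> (\<Sum>i<Suc k. pmf p (z i)) \<le> \<delta>" by force
    define A where "A m = z ` {k. k < m \<and> enat k < N}" for m
    have sumA: "(\<Sum>k\<in>{k. k < m \<and> enat k < N}. pmf p (z k)) \<le> \<delta>" for m
    proof (induction m)
      case 0 then show ?case using \<delta> by simp
    next
      case (Suc m)
      show ?case
      proof (cases "enat m < N")
        case True
        have "{k. k < Suc m \<and> enat k < N} = {..<Suc m}"
          using True enat_lt_le[of _ "Suc m" N] by (auto simp: Suc_ile_eq)
        then show ?thesis using all[OF True] by simp
      next
        case False
        have "{k. k < Suc m \<and> enat k < N} = {k. k < m \<and> enat k < N}"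
          using False less_Suc_eq by auto
        then show ?thesis using Suc by simp
      qed
    qed
    have mA: "measure p (A m) \<le> \<delta>" for m
    proof -
      have "inj_on z {k. k < m \<and> enat k < N}"
        using de_inj[OF d] inj_on_subset by (metis (mono_tags, lifting) mem_Collect_eq subsetI)
      then have "measure p (A m) = (\<Sum>k\<in>{k. k < m \<and> enat k < N}. pmf p (z k))"
        unfolding A_def by (simp add: measure_measure_pmf_finite sum.reindex)
      then show ?thesis using sumA by simp
    qed
    have inc: "incseq A" unfolding A_def incseq_def by auto
    have U: "(\<Union>m. A m) = set_pmf p"
    proof
      show "(\<Union>m. A m) \<subseteq> set_pmf p" unfolding A_def using de_mem[OF d] by auto
      show "set_pmf p \<subseteq> (\<Union>m. A m)"
      proof
        fix a assume "a \<in> set_pmf p"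
        then obtain k where "enat k < N" "z k = a" using de_surj[OF d] by blast
        then have "a \<in> A (Suc k)" unfolding A_def by auto
        then show "a \<in> (\<Union>m. A m)" by blast
      qed
    qed
    have lim: "(\<lambda>m. measure p (A m)) \<longlonglongrightarrow> measure p (set_pmf p)"
      using measure_pmf.finite_Lim_measure_incseq[OF _ inc] U by simp
    have "measure p (set_pmf p) = 1"
      by (simp add: measure_pmf_conv_infsetsum infsetsum_pmf_eq_1)
    moreover have "measure p (set_pmf p) \<le> \<delta>"
      using lim mA by (intro LIMSEQ_le_const2) auto
    ultimately show False using \<delta> by simp
  qed
  define k where "k = (LEAST k. enat k < N \<and> \<delta> < (\<Sum>i<Suc k. pmf p (z i)))"
  have k: "enat k < N \<and> \<delta> < (\<Sum>i<Suc k. pmf p (z i))"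
    unfolding k_def using LeastI_ex[OF ex] .
  have "(\<Sum>i<k. pmf p (z i)) \<le> \<delta>"
  proof (cases k)
    case 0 then show ?thesis using \<delta> by simp
  next
    case (Suc j)
    have "enat j < N" using k Suc by (meson enat_ord_simps(2) lessI order.strict_trans)
    moreover have "j < k" using Suc by simp
    ultimately have "\<not> \<delta> < (\<Sum>i<Suc j. pmf p (z i))"
      using not_less_Least k_def by blast
    then show ?thesis using Suc by simp
  qed
  then show ?thesis using k by blast
qed

lemma de_unique:
  assumes "\<delta> < (\<Sum>i<Suc k. pmf p (z i))" "(\<Sum>i<l. pmf p (z i)) \<le> \<delta>"
    "\<delta> < (\<Sum>i<Suc l. pmf p (z i))" "(\<Sum>i<k. pmf p (z i)) \<le> \<delta>"
  shows "k = l"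
proof (rule ccontr)
  assume "k \<noteq> l"
  then consider "Suc k \<le> l" | "Suc l \<le> k" by linarith
  then show False
  proof cases
    case 1 then show False using de_mono[OF 1, of p z] assms by linarith
  next
    case 2 then show False using de_mono[OF 2, of p z] assms by linarith
  qed
qed


lemma measure_Ico: "measure lborel {l..<u::real} = max 0 (u - l)"
proof (cases "l \<le> u")
  case True then show ?thesis by (simp add: measure_def)
next
  case False then show ?thesis by simp
qed

lemma emeasure_Ico_fin: "emeasure lborel {l..<u::real} \<noteq> \<infinity>"
  by (cases "l \<le> u") auto

definition sh :: "real \<Rightarrow> real \<Rightarrow> real" where
  "sh e u = (if u + e < 1 then u + e else u + e - 1)"

lemma sh_range: "0 \<le> e \<Longrightarrow> e < 1 \<Longrightarrow> u \<in> {0..<1} \<Longrightarrow> sh e u \<in> {0..<1}"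
  unfolding sh_def by auto

lemma sh_measure:
  assumes e: "0 \<le> e" "e < 1" and ab: "0 \<le> a" "a \<le> b" "b \<le> 1"
  shows "measure lborel {u\<in>{0..<1}. sh e u \<in> {a..<b}} = b - a"
proof -
  have eq: "{u\<in>{0..<1}. sh e u \<in> {a..<b}} =
     {max 0 (a-e)..<min (1-e) (b-e)} \<union> {a+1-e..<min 1 (b+1-e)}"
    using e ab unfolding sh_def by (auto split: if_splits)
  have "measure lborel ({max 0 (a-e)..<min (1-e) (b-e)} \<union> {a+1-e..<min 1 (b+1-e)})
      = measure lborel {max 0 (a-e)..<min (1-e) (b-e)} + measure lborel {a+1-e..<min 1 (b+1-e)}"
    using ab emeasure_Ico_fin by (subst measure_Union) auto
  also have "\<dots> = b - a" unfolding measure_Ico using e ab by (auto simp: max_def min_def)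
  finally show ?thesis using eq by simp
qed


definition NN :: "'a pmf \<Rightarrow> enat" where "NN p = (SOME N. \<exists>z. dec_enum p N z)"
definition ZZ :: "'a pmf \<Rightarrow> nat \<Rightarrow> 'a" where "ZZ p = (SOME z. dec_enum p (NN p) z)"
definition idx :: "'a pmf \<Rightarrow> real \<Rightarrow> nat" where
  "idx p \<delta> = (THE k. enat k < NN p \<and> (\<Sum>i<k. pmf p (ZZ p i)) \<le> \<delta> \<and> \<delta> < (\<Sum>i\<le>k. pmf p (ZZ p i)))"

lemma dZ: "dec_enum p (NN p) (ZZ p)"
proof -
  have "\<exists>z. dec_enum p (NN p) z" unfolding NN_def using dec_enum_exists by (rule someI_ex)
  then show ?thesis unfolding ZZ_def by (rule someI_ex)
qed

lemma cfun_idx: "cfun p \<delta> = ln (1 / pmf p (ZZ p (idx p \<delta>)))"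
  unfolding cfun_def Let_def NN_def[symmetric] ZZ_def[symmetric] idx_def[symmetric] ..

lemma idx_char:
  assumes "0 \<le> \<delta>" "\<delta> < 1" "enat k < NN p"
  shows "idx p \<delta> = k \<longleftrightarrow> (\<Sum>i<k. pmf p (ZZ p i)) \<le> \<delta> \<and> \<delta> < (\<Sum>i<Suc k. pmf p (ZZ p i))"
proof -
  obtain k0 where k0: "enat k0 < NN p" "(\<Sum>i<k0. pmf p (ZZ p i)) \<le> \<delta>" "\<delta> < (\<Sum>i<Suc k0. pmf p (ZZ p i))"
    using de_exists[OF dZ assms(1,2)] by blast
  have uq: "\<And>k. enat k < NN p \<and> (\<Sum>i<k. pmf p (ZZ p i)) \<le> \<delta> \<and> \<delta> < (\<Sum>i\<le>k. pmf p (ZZ p i)) \<Longrightarrow> k = k0"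
    using k0 de_unique by (metis lessThan_Suc_atMost)
  have "idx p \<delta> = k0" unfolding idx_def
  proof (rule the_equality)
    show "enat k0 < NN p \<and> (\<Sum>i<k0. pmf p (ZZ p i)) \<le> \<delta> \<and> \<delta> < (\<Sum>i\<le>k0. pmf p (ZZ p i))"
      using k0 by (simp add: lessThan_Suc_atMost[symmetric])
  qed (rule uq)
  moreover have "k = k0" if "(\<Sum>i<k. pmf p (ZZ p i)) \<le> \<delta> \<and> \<delta> < (\<Sum>i<Suc k. pmf p (ZZ p i))"
    using de_unique[where k=k and l=k0 and z="ZZ p"] that k0 by blast
  ultimately show ?thesis using k0 by blast
qed

lemma idx_lt:
  assumes "0 \<le> \<delta>" "\<delta> < 1"
  shows "enat (idx p \<delta>) < NN p"
proof -
  obtain k0 where k0: "enat k0 < NN p" "(\<Sum>i<k0. pmf p (ZZ p i)) \<le> \<delta>" "\<delta> < (\<Sum>i<Suc k0. pmf p (ZZ p i))"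
    using de_exists[OF dZ assms(1,2)] by blast
  then have "idx p \<delta> = k0" using idx_char[OF assms k0(1)] by simp
  then show ?thesis using k0 by simp
qed

lemma marg:
  assumes e: "0 \<le> e" "e < 1"
  shows "measure lborel {u\<in>{0..<1}. ZZ p (idx p (sh e u)) = a} = pmf p a"
proof (cases "a \<in> set_pmf p")
  case True
  obtain k where k: "enat k < NN p" "ZZ p k = a" using de_surj[OF dZ True] by metis
  define lo where "lo = (\<Sum>i<k. pmf p (ZZ p i))"
  define hi where "hi = (\<Sum>i<Suc k. pmf p (ZZ p i))"
  have iff: "ZZ p (idx p (sh e u)) = a \<longleftrightarrow> sh e u \<in> {lo..<hi}" if u: "u \<in> {0..<1}" for u
  proof -
    have r: "sh e u \<in> {0..<1}" using sh_range[OF e u] .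
    then have "enat (idx p (sh e u)) < NN p" using idx_lt by auto
    then have "ZZ p (idx p (sh e u)) = a \<longleftrightarrow> idx p (sh e u) = k"
      using de_inj[OF dZ] k unfolding inj_on_def by auto
    also have "\<dots> \<longleftrightarrow> sh e u \<in> {lo..<hi}"
      using idx_char[of "sh e u" k p] r k(1) unfolding lo_def hi_def by auto
    finally show ?thesis .
  qed
  have "{u\<in>{0..<1}. ZZ p (idx p (sh e u)) = a} = {u\<in>{0..<1}. sh e u \<in> {lo..<hi}}"
    using iff by blast
  moreover have "measure lborel {u\<in>{0..<1}. sh e u \<in> {lo..<hi}} = hi - lo"
  proof (rule sh_measure[OF e])
    show "0 \<le> lo" unfolding lo_def by (intro sum_nonneg) (simp add: pmf_nonneg)
    show "lo \<le> hi" unfolding lo_def hi_def by (rule de_mono) simp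
    show "hi \<le> 1" unfolding hi_def using de_le1[OF dZ, of "Suc k" p] k(1) by (simp only: Suc_ile_eq)
  qed
  moreover have "hi - lo = pmf p a" unfolding hi_def lo_def using k by simp
  ultimately show ?thesis by simp
next
  case False
  have "ZZ p (idx p (sh e u)) \<noteq> a" if u: "u \<in> {0..<1}" for u
  proof -
    have r: "sh e u \<in> {0..<1}" using sh_range[OF e u] .
    then have "enat (idx p (sh e u)) < NN p" using idx_lt by auto
    then show ?thesis using de_mem[OF dZ] False by metis
  qed
  then have "{u\<in>{0..<1}. ZZ p (idx p (sh e u)) = a} = {}" by blast
  then show ?thesis using False by (metis measure_empty set_pmf_iff)
qed


definition Mu :: "real measure" where "Mu = restrict_space lborel {0..<1}"
definition ff :: "real \<Rightarrow> 'a pmf \<Rightarrow> 'b pmf \<Rightarrow> real \<Rightarrow> nat \<times> nat" where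
  "ff e p q u = (idx p (sh e u), idx q u)"
definition KK :: "real \<Rightarrow> 'a pmf \<Rightarrow> 'b pmf \<Rightarrow> (nat \<times> nat) pmf" where
  "KK e p q = Abs_pmf (distr Mu (count_space UNIV) (ff e p q))"

lemma space_Mu: "space Mu = {0..<1}"
  unfolding Mu_def by (simp add: space_restrict_space)

lemma prob_Mu: "prob_space Mu"
  unfolding Mu_def by (rule prob_space_restrict_space) auto

interpretation Mu: prob_space Mu by (rule prob_Mu)

lemma sets_Mu: "B \<in> sets borel \<Longrightarrow> {0..<1} \<inter> B \<in> sets Mu"
  unfolding Mu_def sets_restrict_space by auto

lemma sh_borel: "{u. sh e u \<in> {a..<b}} \<in> sets borel"
  unfolding sh_def by measurable

lemma ff_meas:
  assumes e: "0 \<le> e" "e < 1"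
  shows "ff e p q \<in> measurable Mu (count_space UNIV)"
  unfolding measurable_count_space_eq2_countable
proof (intro conjI ballI)
  show "ff e p q \<in> space Mu \<rightarrow> UNIV" by simp
  fix w :: "nat \<times> nat"
  obtain k j where w: "w = (k, j)" by fastforce
  show "ff e p q -` {w} \<inter> space Mu \<in> sets Mu"
  proof (cases "enat k < NN p \<and> enat j < NN q")
    case True
    define B where "B = {u. sh e u \<in> {(\<Sum>i<k. pmf p (ZZ p i))..<(\<Sum>i<Suc k. pmf p (ZZ p i))}}
       \<inter> {(\<Sum>i<j. pmf q (ZZ q i))..<(\<Sum>i<Suc j. pmf q (ZZ q i))}"
    have "ff e p q -` {w} \<inter> space Mu = {0..<1} \<inter> B"
    proof -
      have "ff e p q u = w \<longleftrightarrow> u \<in> B" if u: "u \<in> {0..<1}" for u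
        using idx_char[of "sh e u" k p] idx_char[of u j q] sh_range[OF e u] u True
        unfolding ff_def w B_def by auto
      then show ?thesis unfolding space_Mu by blast
    qed
    moreover have "B \<in> sets borel" unfolding B_def using sh_borel by auto
    ultimately show ?thesis using sets_Mu by simp
  next
    case False
    have "ff e p q -` {w} \<inter> space Mu = {}"
    proof -
      have "ff e p q u \<noteq> w" if u: "u \<in> {0..<1}" for u
        using idx_lt[of "sh e u" p] idx_lt[of u q] sh_range[OF e u] u False
        unfolding ff_def w by auto
      then show ?thesis unfolding space_Mu by blast
    qed
    then show ?thesis by simp
  qed
qed

lemma KK_measure:
  assumes e: "0 \<le> e" "e < 1"
  shows "measure (measure_pmf (KK e p q)) A = measure lborel {u\<in>{0..<1}. ff e p q u \<in> A}"
proof -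
  define D where "D = distr Mu (count_space UNIV) (ff e p q)"
  have pD: "prob_space D" unfolding D_def
    using prob_space.prob_space_distr[OF prob_Mu ff_meas[OF e]] .
  have sD: "sets D = UNIV" unfolding D_def by simp
  have aD: "AE x in D. measure D {x} \<noteq> 0"
  proof -
    interpret prob_space D by (rule pD)
    show ?thesis using AE_support_countable[OF sD] by auto
  qed
  have "measure_pmf (KK e p q) = D" unfolding KK_def D_def[symmetric]
    using pD sD aD by (intro Abs_pmf_inverse) auto
  then have "measure (measure_pmf (KK e p q)) A = measure Mu (ff e p q -` A \<inter> space Mu)"
    unfolding D_def by (simp add: measure_distr[OF ff_meas[OF e]])
  also have "\<dots> = measure lborel (ff e p q -` A \<inter> {0..<1})"
    unfolding space_Mu unfolding Mu_def by (intro measure_restrict_space) auto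
  also have "ff e p q -` A \<inter> {0..<1} = {u\<in>{0..<1}. ff e p q u \<in> A}" by auto
  finally show ?thesis .
qed

definition JJ :: "real \<Rightarrow> 'a pmf \<Rightarrow> 'b pmf \<Rightarrow> ('a \<times> 'b) pmf" where
  "JJ e p q = map_pmf (\<lambda>(k, j). (ZZ p k, ZZ q j)) (KK e p q)"

lemma JJ_fst:
  assumes e: "0 \<le> e" "e < 1"
  shows "map_pmf fst (JJ e p q) = p"
proof (rule pmf_eqI)
  fix a
  have "pmf (map_pmf fst (JJ e p q)) a = measure (measure_pmf (KK e p q)) ((\<lambda>w. ZZ p (fst w)) -` {a})"
    unfolding JJ_def map_pmf_comp pmf_map by (simp add: case_prod_beta)
  also have "\<dots> = measure lborel {u\<in>{0..<1}. ZZ p (idx p (sh e u)) = a}"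
    unfolding KK_measure[OF e] ff_def by simp
  also have "\<dots> = pmf p a" by (rule marg[OF e])
  finally show "pmf (map_pmf fst (JJ e p q)) a = pmf p a" .
qed

lemma JJ_snd:
  assumes e: "0 \<le> e" "e < 1"
  shows "map_pmf snd (JJ e p q) = q"
proof (rule pmf_eqI)
  fix b
  have "pmf (map_pmf snd (JJ e p q)) b = measure (measure_pmf (KK e p q)) ((\<lambda>w. ZZ q (snd w)) -` {b})"
    unfolding JJ_def map_pmf_comp pmf_map by (simp add: case_prod_beta)
  also have "\<dots> = measure lborel {u\<in>{0..<1}. ZZ q (idx q u) = b}"
    unfolding KK_measure[OF e] ff_def by simp
  also have "{u\<in>{0..<1}. ZZ q (idx q u) = b} = {u\<in>{0..<1}. ZZ q (idx q (sh 0 u)) = b}"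
    unfolding sh_def by auto
  also have "measure lborel \<dots> = pmf q b" by (rule marg) auto
  finally show "pmf (map_pmf snd (JJ e p q)) b = pmf q b" .
qed

lemma JJ_bad:
  assumes e: "0 \<le> e" "e < 1"
    and good: "\<And>u. u \<in> {0..<1-e} \<Longrightarrow> cfun p (u + e) - cfun q u \<ge> -\<gamma>"
  shows "measure (measure_pmf (JJ e p q))
           {(x, y). ln (1 / pmf p x) - ln (1 / pmf q y) < - \<gamma>} \<le> e"
proof -
  define S where "S = {u\<in>{0..<1}. cfun p (sh e u) - cfun q u < - \<gamma>}"
  have "measure (measure_pmf (JJ e p q)) {(x, y). ln (1 / pmf p x) - ln (1 / pmf q y) < - \<gamma>}
      = measure lborel S"
    unfolding JJ_def measure_map_pmf KK_measure[OF e] S_def ff_def cfun_idx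
    by (simp add: case_prod_beta)
  also have "\<dots> = measure Mu S"
    unfolding Mu_def S_def by (intro measure_restrict_space[symmetric]) auto
  also have "\<dots> \<le> measure Mu ({0..<1} \<inter> {1-e..<1})"
  proof (rule Mu.finite_measure_mono)
    show "S \<subseteq> {0..<1} \<inter> {1-e..<1}"
    proof
      fix u assume u: "u \<in> S"
      show "u \<in> {0..<1} \<inter> {1-e..<1}"
      proof (rule ccontr)
        assume "u \<notin> {0..<1} \<inter> {1-e..<1}"
        then have "u \<in> {0..<1-e}" "sh e u = u + e" using u unfolding S_def sh_def by auto
        then show False using good[of u] u unfolding S_def by auto
      qed
    qed
    show "{0..<1} \<inter> {1-e..<1} \<in> sets Mu" by (rule sets_Mu) simp
  qed
  also have "\<dots> = measure lborel {1-e..<1::real}"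
    unfolding Mu_def using e by (subst measure_restrict_space) (auto intro!: arg_cong[where f="measure lborel"])
  also have "\<dots> = e" unfolding measure_Ico using e by simp
  finally show ?thesis .
qed


theorem lemma8:
  fixes PX :: "nat \<Rightarrow> 'a pmf" and PY :: "nat \<Rightarrow> 'b pmf"
  assumes "(INF \<epsilon>\<in>{0<..<1::real}. liminf (\<lambda>n.
              INF \<delta>\<in>{0..<1-\<epsilon>}. ereal (cfun (PX n) (\<delta>+\<epsilon>) - cfun (PY n) \<delta>))) \<ge> 0"
  shows "\<exists>J :: nat \<Rightarrow> ('a \<times> 'b) pmf.
           (\<forall>n. map_pmf fst (J n) = PX n \<and> map_pmf snd (J n) = PY n) \<and>
           (\<forall>\<gamma>>0. (\<lambda>n. measure_pmf.prob (J n)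
                 {(x, y). ln (1 / pmf (PX n) x) - ln (1 / pmf (PY n) y) < - \<gamma>})
               \<longlonglongrightarrow> 0)"
proof -
  define P where "P n m \<longleftrightarrow> m \<ge> 1 \<and> (\<forall>\<delta>\<in>{0..<1 - 1/(real m+1)}.
      cfun (PX n) (\<delta> + 1/(real m+1)) - cfun (PY n) \<delta> > -1/real m)" for n m
  define mm where "mm n = Max (insert 0 {m. m \<le> n \<and> P n m})" for n
  define ee where "ee n = (if mm n = 0 then 0 else 1 / (real (mm n) + 1))" for n
  define J where "J n = JJ (ee n) (PX n) (PY n)" for n
  have ee: "0 \<le> ee n" "ee n < 1" for n unfolding ee_def by auto
  have evP: "eventually (\<lambda>n. P n M) sequentially" if M: "M \<ge> 1" for M
  proof -
    define \<epsilon> where "\<epsilon> = 1 / (real M + 1)"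
    have \<epsilon>: "\<epsilon> \<in> {0<..<1}" unfolding \<epsilon>_def using M by auto
    have L0: "0 \<le> liminf (\<lambda>n. INF \<delta>\<in>{0..<1-\<epsilon>}. ereal (cfun (PX n) (\<delta>+\<epsilon>) - cfun (PY n) \<delta>))"
      using assms INF_lower[OF \<epsilon>, of "\<lambda>\<epsilon>. liminf (\<lambda>n.
              INF \<delta>\<in>{0..<1-\<epsilon>}. ereal (cfun (PX n) (\<delta>+\<epsilon>) - cfun (PY n) \<delta>))"] by (rule order.trans)
    have L1: "ereal (-1/real M) < 0" using M by simp
    have "eventually (\<lambda>n. ereal (-1/real M) < (INF \<delta>\<in>{0..<1-\<epsilon>}. ereal (cfun (PX n) (\<delta>+\<epsilon>) - cfun (PY n) \<delta>))) sequentially"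
      by (intro less_LiminfD order.strict_trans2[OF L1 L0])
    then show ?thesis
    proof (rule eventually_mono)
      fix n assume *: "ereal (-1/real M) < (INF \<delta>\<in>{0..<1-\<epsilon>}. ereal (cfun (PX n) (\<delta>+\<epsilon>) - cfun (PY n) \<delta>))"
      have "-1/real M < cfun (PX n) (\<delta>+\<epsilon>) - cfun (PY n) \<delta>" if "\<delta> \<in> {0..<1-\<epsilon>}" for \<delta>
      proof -
        have "ereal (-1/real M) < ereal (cfun (PX n) (\<delta>+\<epsilon>) - cfun (PY n) \<delta>)"
          using * INF_lower[OF that, of "\<lambda>\<delta>. ereal (cfun (PX n) (\<delta>+\<epsilon>) - cfun (PY n) \<delta>)"]
          by (rule order.strict_trans2)
        then show ?thesis by simp
      qed
      then show "P n M" unfolding P_def \<epsilon>_def using M by auto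
    qed
  qed
  have fin: "finite (insert 0 {m. m \<le> n \<and> P n m})" for n by auto
  have evmm: "eventually (\<lambda>n. M \<le> mm n) sequentially" if M: "M \<ge> 1" for M
    using evP[OF M] eventually_ge_at_top[of M]
  proof (rule eventually_elim2)
    fix n assume "P n M" "M \<le> n"
    then show "M \<le> mm n" unfolding mm_def using fin by (intro Max_ge) auto
  qed
  have Pmm: "P n (mm n)" if "mm n \<noteq> 0" for n
  proof -
    have "mm n \<in> insert 0 {m. m \<le> n \<and> P n m}" unfolding mm_def using fin by (intro Max_in) auto
    then show ?thesis using that by auto
  qed
  have marg: "map_pmf fst (J n) = PX n \<and> map_pmf snd (J n) = PY n" for n
    unfolding J_def using JJ_fst[OF ee] JJ_snd[OF ee] by blast
  have lim: "(\<lambda>n. measure_pmf.prob (J n)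
                 {(x, y). ln (1 / pmf (PX n) x) - ln (1 / pmf (PY n) y) < - \<gamma>}) \<longlonglongrightarrow> 0"
    if \<gamma>: "\<gamma> > 0" for \<gamma>
  proof (rule LIMSEQ_I)
    fix r :: real assume r: "r > 0"
    define M where "M = nat \<lceil>1/\<gamma>\<rceil> + nat \<lceil>1/r\<rceil> + 1"
    have M1: "M \<ge> 1" unfolding M_def by simp
    have Mg: "1 / real M \<le> \<gamma>"
    proof -
      have "1/\<gamma> \<le> real M" unfolding M_def by linarith
      then show ?thesis using \<gamma> M1 by (simp add: field_simps)
    qed
    have Mr: "1 / (real M + 1) < r"
    proof -
      have "1/r < real M + 1" unfolding M_def by linarith
      then show ?thesis using r by (simp add: field_simps)
    qed
    obtain no where no: "\<And>n. n \<ge> no \<Longrightarrow> M \<le> mm n"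
      using evmm[OF M1] unfolding eventually_sequentially by blast
    show "\<exists>no. \<forall>n\<ge>no. norm (measure_pmf.prob (J n)
                 {(x, y). ln (1 / pmf (PX n) x) - ln (1 / pmf (PY n) y) < - \<gamma>} - 0) < r"
    proof (intro exI allI impI)
      fix n assume n: "no \<le> n"
      have mn: "M \<le> mm n" using no[OF n] .
      then have mn0: "mm n \<noteq> 0" using M1 by linarith
      have een: "ee n = 1 / (real (mm n) + 1)" unfolding ee_def using mn0 by simp
      have Pn: "P n (mm n)" using Pmm[OF mn0] .
      have good: "cfun (PX n) (u + ee n) - cfun (PY n) u \<ge> -\<gamma>" if "u \<in> {0..<1 - ee n}" for u
      proof -
        have "-1/real (mm n) < cfun (PX n) (u + ee n) - cfun (PY n) u"
          using Pn that unfolding P_def een by auto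
        moreover have "1/real (mm n) \<le> 1 / real M"
          using mn M1 by (intro divide_left_mono) auto
        ultimately show ?thesis using Mg by simp
      qed
      have b: "measure_pmf.prob (J n)
                 {(x, y). ln (1 / pmf (PX n) x) - ln (1 / pmf (PY n) y) < - \<gamma>} \<le> ee n"
        unfolding J_def by (rule JJ_bad[OF ee good])
      have "ee n \<le> 1 / (real M + 1)" unfolding een using mn M1 by (intro divide_left_mono) auto
      then show "norm (measure_pmf.prob (J n)
                 {(x, y). ln (1 / pmf (PX n) x) - ln (1 / pmf (PY n) y) < - \<gamma>} - 0) < r"
        using b Mr by simp
    qed
  qed
  show ?thesis using marg lim by blast
qed

end
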